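(* Let $k\ge2$, $n\ge1$, $A=\{0<1<\cdots<k-1\}$, $v\in\Gamma_{k,n}$ and $\pi=\pi(v)=\bigcup_{i}\pi_{i}$ its standard permutation of $[k^{n}]$. Let $1\le m\le n$ and $e=\varepsilon_{1}\varepsilon_{2}\cdots\varepsilon_{m}\in A^{m}$. Then for every $x\in[k^{n}]$ whose $n$-digit base-$k$ representation has $e$ as a prefix, the $m$-string of $x$ (with respect to $\pi$) is $e$. Moreover the domain of $p_{e}=\pi_{\varepsilon_{1}}\pi_{\varepsilon_{2}}\cdots\pi_{\varepsilon_{m}}$ is the interval of all $x\in[k^{n}]$ whose $n$-digit base-$k$ representation begins with $e$. In particular, for $x\in[k^{n}]$ identified with its $n$-digit base-$k$ representation, $\mathrm{dom}\,p_{x}=\{x\}$.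
   Context: $[N]=\{0<\cdots<N-1\}$. $G\subseteq A^{k}$ is the set of words of length $k$ containing each letter of $A$ exactly once, and $\Gamma_{k,n}=G^{k^{n-1}}$. Standard permutation of $w\in A^{N}$: let $f(w)$ be the letters of $w$ in nondecreasing order; for each letter $a$, $\pi_{a}$ is the unique order-preserving injective partial map on $[N]$ with domain the positions (from $0$) of $a$ in $f(w)$ and range the positions of $a$ in $w$; $\pi(w)=\bigcup_{a}\pi_{a}$. Maps compose left to right. For $x\in[k^{n}]$ and $m\ge0$ there is a unique sequence $\varepsilon_{1},\dots,\varepsilon_{m}\in A$ such that $x\cdot\pi_{\varepsilon_{1}}\cdots\pi_{\varepsilon_{m}}$ is defined; the word $\varepsilon_{1}\cdots\varepsilon_{m}$ is called the $m$-string of $x$. *)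

theory Defs
  imports Main
begin

definition G :: "nat \<Rightarrow> nat list set" where
  "G k = {w. length w = k \<and> set w \<subseteq> {..<k} \<and> (\<forall>a<k. count_list w a = 1)}"

definition Gamma :: "nat \<Rightarrow> nat \<Rightarrow> nat list set" where
  "Gamma k n = {concat ws | ws. length ws = k ^ (n - 1) \<and> set ws \<subseteq> G k}"

definition positions :: "nat list \<Rightarrow> nat \<Rightarrow> nat list" where
  "positions w a = filter (\<lambda>i. w ! i = a) [0..<length w]"

text \<open>pi_a: the order-preserving partial map from the positions of a in the sorted
  word f(w) onto the positions of a in w.\<close>
definition pi_letter :: "nat list \<Rightarrow> nat \<Rightarrow> (nat \<rightharpoonup> nat)" where
  "pi_letter w a = map_of (zip (positions (sort w) a) (positions w a))"

definition std_perm :: "nat list \<Rightarrow> (nat \<rightharpoonup> nat)" where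
  "std_perm w = (\<lambda>x. if (\<exists>a. x \<in> dom (pi_letter w a))
                     then pi_letter w (SOME a. x \<in> dom (pi_letter w a)) x else None)"

text \<open>Left-to-right composition: x . pi_{e1} ... pi_{em}.\<close>
definition path :: "nat list \<Rightarrow> nat list \<Rightarrow> (nat \<rightharpoonup> nat)" where
  "path w e x = foldl (\<lambda>y a. Option.bind y (pi_letter w a)) (Some x) e"

definition m_string :: "nat \<Rightarrow> nat list \<Rightarrow> nat \<Rightarrow> nat \<Rightarrow> nat list" where
  "m_string k w m x = (THE e. length e = m \<and> set e \<subseteq> {..<k} \<and> x \<in> dom (path w e))"

definition digits :: "nat \<Rightarrow> nat \<Rightarrow> nat \<Rightarrow> nat list" where
  "digits k n x = map (\<lambda>i. x div k ^ (n - 1 - i) mod k) [0..<n]"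

end

theory Submission
  imports Defs "HOL-Library.Multiset"
begin

lemma concat_nth_blocks:
  assumes "\<forall>w\<in>set ws. length w = L" "j < length ws" "r < L"
  shows "concat ws ! (j*L + r) = ws!j!r"
  using assms
proof (induction ws arbitrary: j)
  case Nil then show ?case by simp
next
  case (Cons w ws)
  show ?case
  proof (cases j)
    case 0 then show ?thesis using Cons.prems by (simp add: nth_append)
  next
    case (Suc j')
    have "concat (w#ws) ! (j*L + r) = concat ws ! (j'*L + r)"
      using Cons.prems Suc by (simp add: nth_append)
    then show ?thesis using Cons Suc by simp
  qed
qed

lemma length_concat_blocks:
  assumes "\<forall>w\<in>set ws. length w = L"
  shows "length (concat ws) = length ws * L"
  using assms by (induction ws) auto

lemma positions_props:
  "sorted (positions w a)" "distinct (positions w a)"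
  "set (positions w a) = {i. i < length w \<and> w ! i = a}"
  unfolding positions_def by (auto intro: sorted_wrt_filter)

lemma strict_sorted_map:
  assumes "\<And>i j. i < j \<Longrightarrow> j < K \<Longrightarrow> g i < g j"
  shows "sorted (map g [0..<K])" "distinct (map g [0..<K])"
proof -
  have "sorted_wrt (<) (map g [0..<K])"
    by (auto simp: sorted_wrt_iff_nth_less assms)
  then show "sorted (map g [0..<K])" "distinct (map g [0..<K])"
    by (auto simp: strict_sorted_iff)
qed

lemma mod_div_lem: "(x::nat) mod (b*c) div b = x div b mod c"
proof (cases "b = 0")
  case True then show ?thesis by simp
next
  case False
  have "x mod (b*c) = b*(x div b mod c) + x mod b" by (rule mod_mult2_eq)
  then show ?thesis using False by simp
qed

lemma digit_lem: "((x::nat) mod k^(p+q+1) div k^p) mod k = (x div k^p) mod k"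
proof -
  have "k^(p+q+1) = k^p * k^(q+1)" by (simp add: power_add)
  then have "x mod k^(p+q+1) div k^p = x div k^p mod k^(q+1)" using mod_div_lem[of x "k^p" "k^(q+1)"] by metis
  moreover have "k dvd k^(q+1)" by simp
  ultimately show ?thesis by (simp add: mod_mod_cancel)
qed

lemma length_digits[simp]: "length (digits k n x) = n"
  by (simp add: digits_def)

lemma nth_digits: "i < n \<Longrightarrow> digits k n x ! i = x div k^(n-1-i) mod k"
  by (simp add: digits_def)

lemma digits_Suc: "digits k (Suc n) x = digits k n (x div k) @ [x mod k]"
proof (rule nth_equalityI)
  fix i assume "i < length (digits k (Suc n) x)"
  then have i: "i < Suc n" by simp
  show "digits k (Suc n) x ! i = (digits k n (x div k) @ [x mod k]) ! i"
  proof (cases "i < n")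
    case True
    have ni: "n - i = Suc (n-1-i)" using True by simp
    have "x div k div k^(n-1-i) = x div k^(n-i)"
      unfolding ni by (simp add: div_mult2_eq)
    then show ?thesis using True by (simp add: nth_append nth_digits)
  next
    case False
    then have "i = n" using i by simp
    then show ?thesis by (simp add: nth_append nth_digits)
  qed
qed simp

lemma digits_inj: "x < k^n \<Longrightarrow> y < k^n \<Longrightarrow> digits k n x = digits k n y \<Longrightarrow> x = y"
proof (induction n arbitrary: x y)
  case 0 then show ?case by simp
next
  case (Suc n)
  from Suc.prems(3) have e: "digits k n (x div k) = digits k n (y div k)" "x mod k = y mod k"
    by (simp_all add: digits_Suc)
  have "x div k < k^n" "y div k < k^n" using Suc.prems(1,2)
    by (simp_all add: less_mult_imp_div_less mult.commute)
  then have "x div k = y div k" using Suc.IH e by blast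
  then show ?case using e by (metis div_mod_decomp)
qed

lemma foldl_None: "foldl (\<lambda>y a. Option.bind y (f a)) None e = None"
  by (induction e) auto

lemma path_Nil: "path v [] x = Some x"
  by (simp add: path_def)

lemma path_Cons: "path v (a#e) x = Option.bind (pi_letter v a x) (path v e)"
proof (cases "pi_letter v a x")
  case None then show ?thesis by (simp add: path_def foldl_None)
next
  case (Some y) then show ?thesis by (simp add: path_def)
qed


lemma count_list_replicate: "count_list (replicate K c) b = (if c = b then K else 0)"
  by (induction K) auto

lemma G_props:
  assumes "w \<in> G k"
  shows "length w = k" "set w \<subseteq> {..<k}" "\<And>b. count_list w b = (if b < k then 1 else 0)"
    "distinct w" "\<And>b. b < k \<Longrightarrow> b \<in> set w"
proof -
  show l: "length w = k" and s: "set w \<subseteq> {..<k}" using assms by (auto simp: G_def)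
  show c: "\<And>b. count_list w b = (if b < k then 1 else 0)"
    using assms s by (auto simp: G_def count_list_0_iff)
  show m: "b \<in> set w" if "b < k" for b
  proof -
    have "count_list w b = 1" using c that by simp
    then show ?thesis by (metis count_notin zero_neq_one)
  qed
  show "distinct w" unfolding distinct_count_atmost_1 count_mset
    using c s m by (auto simp: count_list_0_iff)
qed

lemma sort_blocks:
  assumes K: "K > 0" and ws: "set ws \<subseteq> G k" "length ws = K"
  shows "sort (concat ws) = concat (map (\<lambda>b. replicate K b) [0..<k])"
proof (rule properties_for_sort)
  let ?s = "concat (map (\<lambda>b. replicate K b) [0..<k])"
  have c1: "count_list (concat ws) b = (if b < k then K else 0)" for b
  proof -
    have "map (\<lambda>w. count_list w b) ws = replicate K (if b < k then 1 else 0)"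
    proof (rule replicate_eqI)
      show "length (map (\<lambda>w. count_list w b) ws) = K" using ws by simp
      fix y assume "y \<in> set (map (\<lambda>w. count_list w b) ws)"
      then obtain w where "w \<in> set ws" "y = count_list w b" by auto
      then show "y = (if b < k then 1 else 0)" using ws G_props(3)[of w k b] by auto
    qed
    then show ?thesis by (simp add: count_list_concat sum_list_replicate)
  qed
  have c2: "count_list ?s b = (if b < k then K else 0)" for b
  proof -
    have "count_list ?s b = (\<Sum>c\<in>{0..<k}. if c = b then K else 0)"
      by (simp add: count_list_concat count_list_replicate o_def interv_sum_list_conv_sum_set_nat)
    also have "\<dots> = (if b < k then K else 0)" by (simp add: sum.delta')
    finally show ?thesis .
  qed
  show "mset ?s = mset (concat ws)"
    by (simp add: multiset_eq_iff count_mset c1 c2)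
  have ls: "length ?s = k*K" by (simp add: length_concat o_def sum_list_triv)
  have sn: "?s ! i = i div K" if "i < k*K" for i
  proof -
    have "i div K < k" using that by (simp add: less_mult_imp_div_less)
    then have "?s ! ((i div K)*K + i mod K) = replicate K (i div K) ! (i mod K)"
      using K by (subst concat_nth_blocks) auto
    then show ?thesis using K by simp
  qed
  show "sorted ?s" unfolding sorted_iff_nth_mono ls
    using sn by (simp add: div_le_mono)
qed


lemma positions_sorted_blocks:
  assumes K: "K > 0" and a: "a < k"
  shows "positions (concat (map (\<lambda>b. replicate K b) [0..<k])) a = [a*K..<a*K+K]"
proof -
  let ?s = "concat (map (\<lambda>b. replicate K b) [0..<k])"
  have ls: "length ?s = k*K" by (simp add: length_concat o_def sum_list_triv)
  have sn: "?s ! i = i div K" if "i < k*K" for i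
  proof -
    have "i div K < k" using that by (simp add: less_mult_imp_div_less)
    then have "?s ! ((i div K)*K + i mod K) = replicate K (i div K) ! (i mod K)"
      using K by (subst concat_nth_blocks) auto
    then show ?thesis using K by simp
  qed
  have "set (positions ?s a) = {a*K..<a*K+K}"
  proof -
    have dv: "i div K = a \<longleftrightarrow> a*K \<le> i \<and> i < a*K+K" for i
      using K by (smt (verit, best) Euclidean_Rings.div_eq_0_iff add_cancel_left_right
    div_mult_self4 less_eq_div_iff_mult_less_eq mult.commute
    nat_add_left_cancel_less nat_le_iff_add neq0_conv)
    have b: "a*K+K \<le> k*K" using a
      by (metis Suc_leI add.commute mult_Suc mult_le_mono1)
    have "(i < k*K \<and> ?s!i = a) \<longleftrightarrow> i \<in> {a*K..<a*K+K}" for i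
    proof (cases "i < k*K")
      case True then show ?thesis using sn[OF True] dv[of i] by simp
    next
      case False then show ?thesis using b by auto
    qed
    then show ?thesis unfolding positions_props(3) ls by blast
  qed
  then show ?thesis
    using positions_props(1,2) by (intro sorted_distinct_set_unique) auto
qed

lemma pi_char:
  assumes K: "K > 0" and ws: "set ws \<subseteq> G k" "length ws = K" and a: "a < k"
  shows "\<exists>f. (\<forall>j<K. f j < k) \<and> (\<forall>x. pi_letter (concat ws) a x =
     (if a*K \<le> x \<and> x < a*K+K then Some ((x - a*K)*k + f (x - a*K)) else None))"
proof -
  have inG: "j < K \<Longrightarrow> ws!j \<in> G k" for j using ws by auto
  have blk: "\<forall>w\<in>set ws. length w = k" using ws G_props(1) by auto
  have "\<forall>j<K. \<exists>r<k. ws!j!r = a"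
  proof (intro allI impI)
    fix j assume "j < K"
    then have "a \<in> set (ws!j)" "length (ws!j) = k" using G_props(1,5)[OF inG] a by auto
    then show "\<exists>r<k. ws!j!r = a" by (metis in_set_conv_nth)
  qed
  then obtain f where f: "\<forall>j<K. f j < k \<and> ws!j!(f j) = a" by metis
  have uniq: "r = f j" if "j < K" "r < k" "ws!j!r = a" for j r
  proof -
    have "distinct (ws!j)" "length (ws!j) = k" using G_props(1,4)[OF inG] that by auto
    then show ?thesis using f that by (metis nth_eq_iff_index_eq)
  qed
  define v where "v = concat ws"
  have kpos: "k > 0" using a by simp
  have lv: "length v = K*k" unfolding v_def using length_concat_blocks[OF blk] ws by simp
  have vn: "v!i = ws!(i div k)!(i mod k)" if "i < K*k" for i
  proof -
    have "i div k < K" using that by (simp add: less_mult_imp_div_less)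
    then have "v ! ((i div k)*k + i mod k) = ws!(i div k)!(i mod k)"
      unfolding v_def using blk ws kpos by (subst concat_nth_blocks) auto
    then show ?thesis by simp
  qed
  define g where "g j = j*k + f j" for j
  have gmono: "g i < g j" if "i < j" "j < K" for i j
  proof -
    have "g i < i*k + k" using f that by (simp add: g_def)
    also have "\<dots> \<le> j*k" using that by (metis Suc_leI mult_Suc mult_le_mono1 add.commute)
    finally show ?thesis by (simp add: g_def)
  qed
  have gK: "g j < K*k" if "j < K" for j
  proof -
    have "g j < j*k + k" using f that by (simp add: g_def)
    also have "\<dots> \<le> K*k" using that by (metis Suc_leI mult_Suc mult_le_mono1 add.commute)
    finally show ?thesis .
  qed
  have pv: "positions v a = map g [0..<K]"
  proof (rule sorted_distinct_set_unique)
    show "sorted (map g [0..<K])" "distinct (map g [0..<K])"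
      using strict_sorted_map[of K g] gmono by auto
    show "sorted (positions v a)" "distinct (positions v a)" by (rule positions_props)+
    show "set (positions v a) = set (map g [0..<K])"
    proof
      show "set (positions v a) \<subseteq> set (map g [0..<K])"
      proof
        fix i assume "i \<in> set (positions v a)"
        then have i: "i < K*k" "v!i = a" unfolding positions_props(3) lv by auto
        have "i div k < K" using i by (simp add: less_mult_imp_div_less)
        moreover have "i mod k = f (i div k)"
          using uniq[of "i div k" "i mod k"] i vn kpos calculation by auto
        moreover have "i = g (i div k)" using calculation div_mod_decomp[of i k] by (simp add: g_def)
        ultimately show "i \<in> set (map g [0..<K])" by auto
      qed
      show "set (map g [0..<K]) \<subseteq> set (positions v a)"
      proof
        fix i assume "i \<in> set (map g [0..<K])"
        then obtain j where j: "j < K" "i = g j" by auto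
        have "v!(j*k + f j) = ws!j!(f j)"
          unfolding v_def by (rule concat_nth_blocks) (use j f blk ws in auto)
        then have "v!i = a" using j f by (simp add: g_def)
        then show "i \<in> set (positions v a)" unfolding positions_props(3) lv using gK j by auto
      qed
    qed
  qed
  have ps: "positions (sort v) a = [a*K..<a*K+K]"
    unfolding v_def using sort_blocks[OF K ws] positions_sorted_blocks[OF K a] by simp
  have "pi_letter v a x =
     (if a*K \<le> x \<and> x < a*K+K then Some ((x - a*K)*k + f (x - a*K)) else None)" for x
  proof (cases "a*K \<le> x \<and> x < a*K+K")
    case True
    have "pi_letter v a x = map_of (zip [a*K..<a*K+K] (map g [0..<K])) ([a*K..<a*K+K] ! (x - a*K))"
      unfolding pi_letter_def ps pv using True by simp
    also have "\<dots> = Some (map g [0..<K] ! (x - a*K))"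
      by (rule map_of_zip_nth) (use True in auto)
    also have "map g [0..<K] ! (x - a*K) = g (x - a*K)" using True by (simp add: less_diff_conv2)
    finally show ?thesis using True by (simp add: g_def)
  next
    case False
    have "map_of (zip [a*K..<a*K+K] (map g [0..<K])) x = None"
      using False by (subst map_of_zip_is_None) auto
    then have "pi_letter v a x = None" unfolding pi_letter_def ps pv .
    then show ?thesis using False by (simp only: if_False)
  qed
  then show ?thesis using f unfolding v_def by blast
qed


lemma pi_step:
  assumes K: "K > 0" and ws: "set ws \<subseteq> G k" "length ws = K" and a: "a < k"
  shows "pi_letter (concat ws) a x \<noteq> None \<longleftrightarrow> x < K*k \<and> x div K = a"
    and "pi_letter (concat ws) a x = Some y \<Longrightarrow> y < K*k \<and> y div k = x mod K"
proof -
  obtain f where f: "\<forall>j<K. f j < k" and pe: "\<And>x. pi_letter (concat ws) a x =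
     (if a*K \<le> x \<and> x < a*K+K then Some ((x - a*K)*k + f (x - a*K)) else None)"
    using pi_char[OF K ws a] by blast
  have dv: "x div K = a \<longleftrightarrow> a*K \<le> x \<and> x < a*K+K" for x
      using K by (smt (verit, best) Euclidean_Rings.div_eq_0_iff add_cancel_left_right
    div_mult_self4 less_eq_div_iff_mult_less_eq mult.commute
    nat_add_left_cancel_less nat_le_iff_add neq0_conv)
  have b: "a*K+K \<le> K*k" using a
      by (metis Suc_leI add.commute mult_Suc mult_le_mono1 mult.commute)
  show "pi_letter (concat ws) a x \<noteq> None \<longleftrightarrow> x < K*k \<and> x div K = a"
    unfolding pe dv using b by auto
  assume "pi_letter (concat ws) a x = Some y"
  then have r: "a*K \<le> x" "x < a*K+K" and y: "y = (x - a*K)*k + f (x - a*K)"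
    unfolding pe by (auto split: if_splits)
  have j: "x - a*K < K" using r by linarith
  then have fj: "f (x - a*K) < k" using f by auto
  have "y < (x - a*K)*k + k" using y fj by simp
  also have "\<dots> \<le> K*k" using j by (metis Suc_leI mult_Suc mult_le_mono1 add.commute)
  finally have "y < K*k" .
  moreover have "y div k = x - a*K" using y fj by simp
  moreover have "x mod K = x - a*K"
  proof -
    have "x div K = a" using dv r by auto
    then show ?thesis by (metis minus_div_mult_eq_mod)
  qed
  ultimately show "y < K*k \<and> y div k = x mod K" by simp
qed

lemma shift_digits:
  assumes "y div k = x mod k^(n-1)" "l \<le> n - 1"
  shows "take l (digits k n y) = take l (tl (digits k n x))"
proof (rule nth_equalityI)
  show "length (take l (digits k n y)) = length (take l (tl (digits k n x)))"
    using assms by simp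
  fix i assume "i < length (take l (digits k n y))"
  then have i: "i < l" "i < n - 1" using assms by auto
  define p where "p = n - 2 - i"
  have np: "n - 1 - i = Suc p" "n - 1 = p + i + 1" "n - 1 - Suc i = p" using i by (auto simp: p_def)
  have "digits k n y ! i = y div k^(Suc p) mod k" using i np by (simp add: nth_digits)
  also have "\<dots> = x mod k^(p+i+1) div k^p mod k"
    using assms(1) np by (simp add: div_mult2_eq)
  also have "\<dots> = x div k^p mod k" by (rule digit_lem)
  also have "\<dots> = digits k n x ! Suc i" using i np by (simp add: nth_digits)
  finally show "take l (digits k n y) ! i = take l (tl (digits k n x)) ! i"
    using i by (simp add: nth_tl)
qed

lemma path_dom:
  assumes k: "k \<ge> 2" and n: "n \<ge> 1" and ws: "set ws \<subseteq> G k" "length ws = k^(n-1)"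
  shows "e \<noteq> [] \<Longrightarrow> length e \<le> n \<Longrightarrow> set e \<subseteq> {..<k} \<Longrightarrow>
    (x \<in> dom (path (concat ws) e) \<longleftrightarrow> x < k^n \<and> take (length e) (digits k n x) = e)"
proof (induction e arbitrary: x)
  case Nil then show ?case by simp
next
  case (Cons a e)
  define K where "K = k^(n-1)"
  have K: "K > 0" using k by (simp add: K_def)
  have kn: "k^n = K*k" using n unfolding K_def
    by (metis Suc_diff_le diff_Suc_1 mult.commute power_Suc)
  have a: "a < k" using Cons.prems by auto
  note ps = pi_step[OF K ws(1) ws(2)[folded K_def] a]
  obtain d ds where dd: "digits k n x = d # ds" using n
    by (metis length_digits le_zero_eq list.exhaust list.size(3) not_one_le_zero)
  have d: "d = x div K mod k" using dd n nth_digits[of 0 n k x] by (simp add: K_def)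
  have ds: "ds = tl (digits k n x)" using dd by simp
  have dK: "d = x div K" if "x < K*k"
  proof -
    have "x div K < k" using that by (simp add: less_mult_imp_div_less mult.commute)
    then show ?thesis using d by simp
  qed
  show ?case
  proof (cases "e = []")
    case True
    have "x \<in> dom (path (concat ws) (a#e)) \<longleftrightarrow> pi_letter (concat ws) a x \<noteq> None"
      using True by (cases "pi_letter (concat ws) a x") (auto simp: path_Cons path_Nil)
    also have "\<dots> \<longleftrightarrow> x < K*k \<and> x div K = a" by (rule ps(1))
    also have "\<dots> \<longleftrightarrow> x < k^n \<and> take (length (a#e)) (digits k n x) = a#e"
      using True dd dK kn by auto
    finally show ?thesis .
  next
    case False
    have IH: "y \<in> dom (path (concat ws) e) \<longleftrightarrow> y < k^n \<and> take (length e) (digits k n y) = e" for y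
      using Cons False by auto
    have le: "length e \<le> n - 1" using Cons.prems by simp
    have "x \<in> dom (path (concat ws) (a#e)) \<longleftrightarrow>
      (\<exists>y. pi_letter (concat ws) a x = Some y \<and> y \<in> dom (path (concat ws) e))"
      by (cases "pi_letter (concat ws) a x") (auto simp: path_Cons)
    also have "\<dots> \<longleftrightarrow> x < K*k \<and> x div K = a \<and> take (length e) ds = e"
    proof
      assume "\<exists>y. pi_letter (concat ws) a x = Some y \<and> y \<in> dom (path (concat ws) e)"
      then obtain y where y: "pi_letter (concat ws) a x = Some y" "y \<in> dom (path (concat ws) e)" by blast
      have 1: "x < K*k \<and> x div K = a" using ps(1) y(1) by auto
      have "y div k = x mod K" using ps(2)[OF y(1)] by simp
      then have "take (length e) (digits k n y) = take (length e) ds"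
        unfolding ds using shift_digits le K_def by auto
      then show "x < K*k \<and> x div K = a \<and> take (length e) ds = e" using 1 IH y(2) by simp
    next
      assume h: "x < K*k \<and> x div K = a \<and> take (length e) ds = e"
      then obtain y where y: "pi_letter (concat ws) a x = Some y" using ps(1) by auto
      have yy: "y < K*k" "y div k = x mod K" using ps(2)[OF y] by auto
      then have "take (length e) (digits k n y) = take (length e) ds"
        unfolding ds using shift_digits le K_def by auto
      then have "y \<in> dom (path (concat ws) e)" using IH h yy kn by simp
      then show "\<exists>y. pi_letter (concat ws) a x = Some y \<and> y \<in> dom (path (concat ws) e)"
        using y by blast
    qed
    also have "\<dots> \<longleftrightarrow> x < k^n \<and> take (length (a#e)) (digits k n x) = a#e"
      using dd dK kn by auto
    finally show ?thesis .
  qed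
qed


theorem lemma3p7:
  fixes k n m :: nat and v e :: "nat list"
  assumes "k \<ge> 2" and "n \<ge> 1" and "v \<in> Gamma k n"
    and "1 \<le> m" and "m \<le> n" and "length e = m" and "set e \<subseteq> {..<k}"
  shows "(\<forall>x < k ^ n. take m (digits k n x) = e \<longrightarrow> m_string k v m x = e)
       \<and> dom (path v e) = {x. x < k ^ n \<and> take m (digits k n x) = e}
       \<and> (\<forall>x < k ^ n. dom (path v (digits k n x)) = {x})"
proof -
  obtain ws where v: "v = concat ws" and ws: "length ws = k^(n-1)" "set ws \<subseteq> G k"
    using assms(3) by (auto simp: Gamma_def)
  note PD = path_dom[OF assms(1,2) ws(2,1), folded v]
  have P2: "dom (path v e) = {x. x < k ^ n \<and> take m (digits k n x) = e}"
  proof -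
    have "e \<noteq> []" using assms by auto
    then have "x \<in> dom (path v e) \<longleftrightarrow> x < k ^ n \<and> take m (digits k n x) = e" for x
      using PD[of e x] assms by simp
    then show ?thesis by blast
  qed
  have P1: "m_string k v m x = e" if "x < k^n" "take m (digits k n x) = e" for x
    unfolding m_string_def
  proof (rule the_equality)
    show "length e = m \<and> set e \<subseteq> {..<k} \<and> x \<in> dom (path v e)"
      using assms P2 that by auto
    fix e' assume e': "length e' = m \<and> set e' \<subseteq> {..<k} \<and> x \<in> dom (path v e')"
    then have "e' \<noteq> []" using assms by auto
    then show "e' = e" using PD[of e' x] e' assms that by auto
  qed
  have P3: "dom (path v (digits k n x)) = {x}" if x: "x < k^n" for x
  proof -
    have ne: "digits k n x \<noteq> []" using assms(2) by (metis length_digits list.size(3) not_one_le_zero)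
    have st: "set (digits k n x) \<subseteq> {..<k}" using assms(1) by (auto simp: digits_def)
    have "dom (path v (digits k n x)) = {y. y < k^n \<and> digits k n y = digits k n x}"
      using PD[OF ne _ st] by (simp add: set_eq_iff)
    also have "\<dots> = {x}" using x digits_inj by auto
    finally show ?thesis .
  qed
  show ?thesis using P1 P2 P3 by blast
qed

end
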